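(* Let $\gamma\ge1$, $u\in\mathbb N_{\ge1}$, and let $X_1,\dots,X_u$ be independent random variables with $X_m\sim\mathrm{Bernoulli}(1-1/m^\gamma)$ for $m=1,\dots,u$. Then for every $\eta\ge1$ with $\lceil\sum_{m=1}^u1/m^\gamma\rceil\le\eta\le u$, $$\mathbb P\Bigl(\sum_{m=1}^uX_m<u-\eta\Bigr)\le\frac{u^{1+\eta}}{\eta^{(\gamma+1)\eta}}\exp\bigl((\gamma+1)\eta\bigr).$$ *)

theory Defs
  imports "HOL-Probability.Probability"
begin

end

theory Submission
  imports Defs
begin

lemma pow_le_exp_fact: "real n ^ n \<le> exp (real n) * fact n"
proof (induction n)
  case 0 then show ?case by simp
next
  case (Suc n)
  show ?case
  proof (cases "n = 0")
    case True then show ?thesis by simp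
  next
    case False
    have npos: "0 < real n ^ n" using False by simp
    have "(1 + 1 / real n) ^ n \<le> exp 1"
      using False by (intro exp_ge_one_plus_x_over_n_power_n) auto
    moreover have "1 + 1 / real n = (1 + real n) / real n" using False by (simp add: field_simps)
    ultimately have "(1 + real n) ^ n / real n ^ n \<le> exp 1" by (simp only: power_divide)
    hence h: "(1 + real n) ^ n \<le> exp 1 * real n ^ n"
      using npos by (simp only: pos_divide_le_eq)
    have "real (Suc n) ^ Suc n = (1 + real n) * (1 + real n) ^ n" by simp
    also have "\<dots> \<le> (1 + real n) * (exp 1 * real n ^ n)"
      using h by (intro mult_left_mono) auto
    also have "\<dots> \<le> (1 + real n) * (exp 1 * (exp (real n) * fact n))"
      using Suc.IH by (intro mult_left_mono) auto
    also have "\<dots> = exp (real (Suc n)) * fact (Suc n)"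
    proof -
      have "exp (real (Suc n)) = exp 1 * exp (real n)" by (simp add: exp_add[symmetric])
      moreover have "(fact (Suc n) :: real) = (1 + real n) * fact n" by simp
      ultimately show ?thesis by simp
    qed
    finally show ?thesis .
  qed
qed


lemma prod_ge_fact:
  "finite S \<Longrightarrow> 0 \<notin> S \<Longrightarrow> card S = n \<Longrightarrow> fact n \<le> (\<Prod>m\<in>S. real m)"
proof (induction n arbitrary: S)
  case 0 then show ?case by simp
next
  case (Suc n)
  have fin: "finite S" and z: "0 \<notin> S" and cS: "card S = Suc n" using Suc.prems by auto
  have ne: "S \<noteq> {}" using cS by auto
  define M where "M = Max S"
  have MS: "M \<in> S" using fin ne unfolding M_def by (rule Max_in)
  have sub: "S \<subseteq> {1..M}"
  proof
    fix x assume x: "x \<in> S"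
    have "x \<le> M" unfolding M_def using fin x by (rule Max_ge)
    moreover have "x \<noteq> 0" using x z by metis
    ultimately show "x \<in> {1..M}" by simp
  qed
  have "card S \<le> card {1..M}" using sub by (intro card_mono) auto
  hence le: "Suc n \<le> M" using cS by simp
  have c: "card (S - {M}) = n" using cS MS fin by simp
  have IH: "fact n \<le> (\<Prod>m\<in>S - {M}. real m)"
    using Suc.IH[of "S - {M}"] fin z c by blast
  have "(\<Prod>m\<in>S. real m) = real M * (\<Prod>m\<in>S - {M}. real m)"
    using fin MS by (rule prod.remove)
  moreover have "real (Suc n) * fact n \<le> real M * (\<Prod>m\<in>S - {M}. real m)"
    using IH le by (intro mult_mono) auto
  moreover have "fact (Suc n) = real (Suc n) * fact n" by (rule fact_Suc)
  ultimately show ?case by simp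
qed

lemma final_arith:
  fixes \<gamma> :: real and u \<eta> :: nat
  assumes "\<gamma> \<ge> 1" "u \<ge> 1" "\<eta> \<ge> 1"
  shows "real (u choose \<eta>) / fact \<eta> powr \<gamma> \<le> real u powr (1 + real \<eta>) / real \<eta> powr ((\<gamma> + 1) * real \<eta>)
              * exp ((\<gamma> + 1) * real \<eta>)"
proof -
  have fpos: "(0::real) < fact \<eta>" by simp
  have b: "real (u choose \<eta>) * fact \<eta> \<le> real u ^ \<eta>"
    using binomial_fact_pow[of u \<eta>] by (metis of_nat_fact of_nat_le_iff of_nat_mult of_nat_power)
  have "real (u choose \<eta>) / fact \<eta> powr \<gamma> = real (u choose \<eta>) * fact \<eta> / fact \<eta> powr (\<gamma> + 1)"
    using fpos by (simp add: powr_add)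
  also have "\<dots> \<le> real u ^ \<eta> / fact \<eta> powr (\<gamma> + 1)"
    using b by (intro divide_right_mono) auto
  also have "\<dots> \<le> real u ^ \<eta> / (real \<eta> ^ \<eta> / exp (real \<eta>)) powr (\<gamma> + 1)"
  proof -
    have "real \<eta> ^ \<eta> / exp (real \<eta>) \<le> fact \<eta>"
      using pow_le_exp_fact[of \<eta>] by (simp add: divide_le_eq mult.commute)
    hence "(real \<eta> ^ \<eta> / exp (real \<eta>)) powr (\<gamma> + 1) \<le> fact \<eta> powr (\<gamma> + 1)"
      using assms by (intro powr_mono2) auto
    moreover have "0 < (real \<eta> ^ \<eta> / exp (real \<eta>)) powr (\<gamma> + 1)" using assms by simp
    ultimately show ?thesis by (intro divide_left_mono) auto
  qed
  also have "\<dots> = real u ^ \<eta> / real \<eta> powr ((\<gamma> + 1) * real \<eta>) * exp ((\<gamma> + 1) * real \<eta>)"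
  proof -
    have "(real \<eta> ^ \<eta> / exp (real \<eta>)) powr (\<gamma> + 1) = real \<eta> powr ((\<gamma> + 1) * real \<eta>) / exp ((\<gamma> + 1) * real \<eta>)"
    proof -
      have a: "0 < real \<eta>" using assms by simp
      have e1: "(real \<eta> ^ \<eta> / exp (real \<eta>)) powr (\<gamma> + 1) = (real \<eta> ^ \<eta>) powr (\<gamma> + 1) / exp (real \<eta>) powr (\<gamma> + 1)"
        by (rule powr_divide)
      have e2: "(real \<eta> ^ \<eta>) = real \<eta> powr (real \<eta>)"
        using a by (rule powr_realpow[symmetric])
      have e3: "(real \<eta> powr (real \<eta>)) powr (\<gamma> + 1) = real \<eta> powr ((\<gamma> + 1) * real \<eta>)"
        by (simp add: powr_powr mult.commute)
      have e4: "exp (real \<eta>) powr (\<gamma> + 1) = exp ((\<gamma> + 1) * real \<eta>)"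
        by (simp add: exp_powr_real mult.commute)
      show ?thesis unfolding e2 e1[unfolded e2] e3 e4 by (rule refl)
    qed
    thus ?thesis by simp
  qed
  also have "\<dots> \<le> real u powr (1 + real \<eta>) / real \<eta> powr ((\<gamma> + 1) * real \<eta>) * exp ((\<gamma> + 1) * real \<eta>)"
  proof -
    have "real u ^ \<eta> \<le> real u powr (1 + real \<eta>)"
    proof -
      have u: "0 < real u" using assms by simp
      have "real u powr (1 + real \<eta>) = real u * real u ^ \<eta>"
        using u by (simp only: powr_add powr_realpow powr_one_gt_zero_iff) (simp add: powr_realpow)
      moreover have "real u ^ \<eta> \<le> real u * real u ^ \<eta>"
        using assms by (simp add: mult_le_cancel_right1)
      ultimately show ?thesis by simp
    qed
    thus ?thesis by (intro mult_right_mono divide_right_mono) auto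
  qed
  finally show ?thesis .
qed

theorem lemmaC2:
  fixes M :: "'a measure" and X :: "nat \<Rightarrow> 'a \<Rightarrow> real"
    and \<gamma> :: real and u \<eta> :: nat
  assumes "prob_space M"
    and "\<gamma> \<ge> 1" and "u \<ge> 1"
    and "prob_space.indep_vars M (\<lambda>_. borel) X {1..u}"
    and "\<forall>m\<in>{1..u}. AE x in M. X m x \<in> {0, 1}"
    and "\<forall>m\<in>{1..u}. measure M {x \<in> space M. X m x = 1} = 1 - 1 / real m powr \<gamma>"
    and "\<eta> \<ge> 1" and "\<lceil>\<Sum>m=1..u. 1 / real m powr \<gamma>\<rceil> \<le> int \<eta>" and "\<eta> \<le> u"
  shows "measure M {x \<in> space M. (\<Sum>m=1..u. X m x) < real u - real \<eta>}
           \<le> real u powr (1 + real \<eta>) / real \<eta> powr ((\<gamma> + 1) * real \<eta>)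
              * exp ((\<gamma> + 1) * real \<eta>)"
proof -
  interpret P: prob_space M by fact
  have rv: "\<And>m. m \<in> {1..u} \<Longrightarrow> X m \<in> borel_measurable M"
    and ind: "P.indep_sets (\<lambda>i. sigma_sets (space M) {X i -` A \<inter> space M | A. A \<in> sets borel}) {1..u}"
    using assms(4) unfolding P.indep_vars_def by auto
  define E where "E m = {x\<in>space M. X m x = 0}" for m
  have Eeq: "E m = X m -` {0} \<inter> space M" for m unfolding E_def by auto
  have Esets: "E m \<in> sets M" if "m \<in> {1..u}" for m
    unfolding Eeq using rv[OF that] by measurable
  have Ein: "E m \<in> sigma_sets (space M) {X m -` A \<inter> space M | A. A \<in> sets borel}" for m
    unfolding Eeq by (rule sigma_sets.Basic) auto
  have Ep: "P.prob (E m) \<le> 1 / real m powr \<gamma>" if m: "m \<in> {1..u}" for m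
  proof -
    define F where "F = {x\<in>space M. X m x = 1}"
    have Fs: "F \<in> sets M" unfolding F_def using rv[OF m] by measurable
    have "P.prob (E m \<union> F) = P.prob (E m) + P.prob F"
      using Esets[OF m] Fs by (intro P.finite_measure_Union) (auto simp: E_def F_def)
    moreover have "P.prob (E m \<union> F) \<le> 1" by simp
    moreover have "P.prob F = 1 - 1 / real m powr \<gamma>" using assms(6) m by (simp add: F_def)
    ultimately show ?thesis by simp
  qed
  define Ss where "Ss = {S. S \<subseteq> {1..u} \<and> card S = \<eta>}"
  define B where "B S = (\<Inter>m\<in>S. E m)" for S
  have finSs: "finite Ss" unfolding Ss_def by (rule finite_subset[of _ "Pow {1..u}"]) auto
  have cardSs: "card Ss = u choose \<eta>" unfolding Ss_def using n_subsets[of "{1..u}" \<eta>] by simp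
  have Bsets: "B S \<in> sets M" if "S \<in> Ss" for S
  proof -
    have "S \<noteq> {}" "finite S" using that assms(7) by (auto simp: Ss_def intro: finite_subset)
    then show ?thesis unfolding B_def using that Esets by (intro sets.finite_INT) (auto simp: Ss_def)
  qed
  have BS: "P.prob (B S) \<le> 1 / fact \<eta> powr \<gamma>" if S: "S \<in> Ss" for S
  proof -
    have ne: "S \<noteq> {}" and fin: "finite S" and sub: "S \<subseteq> {1..u}" and c: "card S = \<eta>"
      using that assms(7) by (auto simp: Ss_def intro: finite_subset)
    have "P.prob (B S) = (\<Prod>m\<in>S. P.prob (E m))"
      unfolding B_def using ind sub ne fin Ein by (intro P.indep_setsD) auto
    also have "\<dots> \<le> (\<Prod>m\<in>S. 1 / real m powr \<gamma>)"
      using sub Ep by (intro prod_mono) auto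
    also have "\<dots> = 1 / (\<Prod>m\<in>S. real m) powr \<gamma>"
      by (simp add: prod_powr_distrib prod_dividef)
    also have "\<dots> \<le> 1 / fact \<eta> powr \<gamma>"
    proof -
      have z: "0 \<notin> S" using sub by auto
      have pp: "0 < (\<Prod>m\<in>S. real m)"
        using z by (intro prod_pos) (metis of_nat_0_less_iff gr0I)
      have "fact \<eta> \<le> (\<Prod>m\<in>S. real m)" using prod_ge_fact[OF fin z c] .
      hence "fact \<eta> powr \<gamma> \<le> (\<Prod>m\<in>S. real m) powr \<gamma>"
        using assms(2) by (intro powr_mono2) auto
      moreover have "0 < fact \<eta> powr \<gamma>" by simp
      moreover have "0 < (\<Prod>m\<in>S. real m) powr \<gamma>" using pp by simp
      ultimately show ?thesis by (intro divide_left_mono) auto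
    qed
    finally show ?thesis .
  qed
  have AE01: "AE x in M. \<forall>m\<in>{1..u}. X m x \<in> {0, 1}"
    using assms(5) by (subst eventually_ball_finite) auto
  have AEsub: "AE x in M. x \<in> {x \<in> space M. (\<Sum>m=1..u. X m x) < real u - real \<eta>} \<longrightarrow> x \<in> (\<Union>S\<in>Ss. B S)"
    using AE01
  proof (rule eventually_mono)
    fix x assume x01: "\<forall>m\<in>{1..u}. X m x \<in> {0, 1}"
    show "x \<in> {x \<in> space M. (\<Sum>m=1..u. X m x) < real u - real \<eta>} \<longrightarrow> x \<in> (\<Union>S\<in>Ss. B S)"
    proof
      assume "x \<in> {x \<in> space M. (\<Sum>m=1..u. X m x) < real u - real \<eta>}"
      hence xs: "x \<in> space M" and lt: "(\<Sum>m=1..u. X m x) < real u - real \<eta>" by auto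
      define Z where "Z = {m\<in>{1..u}. X m x = 0}"
      have "(\<Sum>m=1..u. 1 - X m x) = (\<Sum>m=1..u. (if m \<in> Z then 1 else 0))"
        using x01 by (intro sum.cong) (auto simp: Z_def)
      also have "\<dots> = real (card Z)"
      proof -
        have "{1..u} \<inter> Z = Z" by (auto simp: Z_def)
        thus ?thesis by (simp add: sum.If_cases)
      qed
      finally have "real u - (\<Sum>m=1..u. X m x) = real (card Z)"
        by (simp add: sum_subtractf)
      hence "\<eta> \<le> card Z" using lt by simp
      then obtain S where "S \<subseteq> Z" "card S = \<eta>" by (meson obtain_subset_with_card_n)
      hence "S \<in> Ss" "x \<in> B S" using xs by (auto simp: Ss_def Z_def B_def E_def)
      thus "x \<in> (\<Union>S\<in>Ss. B S)" by auto
    qed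
  qed
  have "measure M {x \<in> space M. (\<Sum>m=1..u. X m x) < real u - real \<eta>} \<le> P.prob (\<Union>S\<in>Ss. B S)"
    using AEsub finSs Bsets by (intro P.finite_measure_mono_AE) auto
  also have "\<dots> \<le> (\<Sum>S\<in>Ss. P.prob (B S))"
    using finSs Bsets by (intro P.finite_measure_subadditive_finite) auto
  also have "\<dots> \<le> (\<Sum>S\<in>Ss. 1 / fact \<eta> powr \<gamma>)"
    using BS by (intro sum_mono) auto
  also have "\<dots> = real (u choose \<eta>) / fact \<eta> powr \<gamma>"
    using cardSs by simp
  also have "\<dots> \<le> real u powr (1 + real \<eta>) / real \<eta> powr ((\<gamma> + 1) * real \<eta>)
              * exp ((\<gamma> + 1) * real \<eta>)"
    using final_arith[OF assms(2) assms(3) assms(7)] .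
  finally show ?thesis .
qed

end
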